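(* Let $n\ge3$ and let $x\in B$ with $|x|=2n+9$ and $\delta(x)\ge5$. Then $[x]_2\notin R$.
   Context: Stern's sequence $(a(n))_{n\ge0}$: $a(0)=0$, $a(1)=1$, $a(2n)=a(n)$, $a(2n+1)=a(n)+a(n+1)$; $s(n)=a(n+1)$. $R$ is the set of record-setters of $s$, i.e. indices $v\ge0$ with $s(i)<s(v)$ for all $i<v$. For a binary string $x$, $[x]_2$ is the integer it represents in base 2 and $|x|$ its length. $B$ denotes the set of nonempty binary strings that are concatenations of blocks each equal to $10$ or $100$; for $x\in B$, $\delta(x)$ is the number of $0$s minus the number of $1$s in $x$, which equals the number of $100$ blocks. *)

theory Defs
  imports Main
begin

function stern :: "nat \<Rightarrow> nat" where
  "stern 0 = 0"
| "stern (Suc 0) = 1"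
| "stern (Suc (Suc n)) =
     (if even n then stern (Suc (n div 2))
      else stern (Suc (n div 2)) + stern (Suc (Suc (n div 2))))"
  by pat_completeness auto
termination by (relation "measure id") (auto elim: oddE)

definition s :: "nat \<Rightarrow> nat" where
  "s n = stern (n + 1)"

definition R :: "nat set" where
  "R = {v. \<forall>i<v. s i < s v}"

definition bin_val :: "bool list \<Rightarrow> nat" where
  "bin_val xs = foldl (\<lambda>acc b. 2 * acc + (if b then 1 else 0)) 0 xs"

inductive_set B :: "bool list set" where
  blk10: "[True, False] \<in> B"
| blk100: "[True, False, False] \<in> B"
| app10: "x \<in> B \<Longrightarrow> x @ [True, False] \<in> B"
| app100: "x \<in> B \<Longrightarrow> x @ [True, False, False] \<in> B"

definition delta :: "bool list \<Rightarrow> int" where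
  "delta x = int (length (filter Not x)) - int (length (filter id x))"

end

theory Submission imports Defs Complex_Main begin

lemma stern_even: "stern (2*m) = stern m"
  by (cases m) auto

lemma stern_odd: "stern (2*m+1) = stern m + stern (m+1)"
  by (cases m) auto

fun stp :: "nat \<times> nat \<Rightarrow> bool \<Rightarrow> nat \<times> nat" where
  "stp (a,b) c = (if c then (a+b, b) else (a, a+b))"

definition vec :: "bool list \<Rightarrow> nat \<times> nat" where "vec xs = foldl stp (0,1) xs"

lemma bin_val_snoc: "bin_val (xs@[b]) = 2*bin_val xs + (if b then 1 else 0)"
  by (simp add: bin_val_def)

lemma vec_snoc: "vec (xs@[b]) = stp (vec xs) b"
  by (simp add: vec_def)

lemma vec_correct: "vec xs = (stern (bin_val xs), stern (bin_val xs + 1))"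
proof (induction xs rule: rev_induct)
  case Nil
  then show ?case by (simp add: vec_def bin_val_def)
next
  case (snoc b xs)
  then show ?case
    using stern_even[of "bin_val xs"] stern_odd[of "bin_val xs"] stern_even[of "bin_val xs + 1"]
    by (auto simp: vec_snoc bin_val_snoc)
qed

lemma s_vec: "s (bin_val xs) = snd (vec xs)"
  by (simp add: s_def vec_correct)

lemma vec_A: "vec xs = (a,b) \<Longrightarrow> vec (xs@[True,False]) = (a+b, a+2*b)"
  by (simp add: vec_def)
lemma vec_C: "vec xs = (a,b) \<Longrightarrow> vec (xs@[True,False,False]) = (a+b, 2*a+3*b)"
  by (simp add: vec_def)

lemma bin_val_append: "bin_val (xs@ys) = bin_val xs * 2^length ys + bin_val ys"
proof (induction ys rule: rev_induct)
  case Nil then show ?case by (simp add: bin_val_def)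
next
  case (snoc y ys)
  have "bin_val (xs @ ys @ [y]) = 2 * bin_val (xs@ys) + (if y then 1 else 0)"
    using bin_val_snoc[of "xs@ys"] by simp
  then show ?case using snoc by (simp add: bin_val_snoc algebra_simps)
qed

lemma bin_val_less: "bin_val xs < 2^length xs"
proof (induction xs rule: rev_induct)
  case Nil then show ?case by (simp add: bin_val_def)
next
  case (snoc y ys) then show ?case by (simp add: bin_val_snoc)
qed

lemma B_shape: "x \<in> B \<Longrightarrow> x = [True,False] \<or> (\<exists>v. x = True#False#False#v) \<or> (\<exists>v. x = True#False#True#v)"
  by (induction rule: B.induct) auto

lemma delta_A: "delta (x@[True,False]) = delta x" by (simp add: delta_def)
lemma delta_C: "delta (x@[True,False,False]) = delta x + 1" by (simp add: delta_def)

lemma delta_nonneg: "x \<in> B \<Longrightarrow> delta x \<ge> 0"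
  by (induction rule: B.induct) (auto simp: delta_def)


definition phi :: real where "phi = (1 + sqrt 5)/2"
definition cc :: real where "cc = 2 / sqrt 5"
definition KC :: real where "KC = (phi^4 - 1)/(phi^3 * cc)"
definition Phi :: "nat \<times> nat \<Rightarrow> real" where "Phi p = real (fst p) + phi * real (snd p)"

lemma s5: "sqrt 5 * sqrt 5 = (5::real)" by simp
lemma s5': "sqrt 5 * (sqrt 5 * x) = (5::real) * x" by (simp add: mult.assoc[symmetric])
lemma s5pos: "sqrt 5 > (0::real)" by simp
lemma s5lo: "sqrt 5 > (11/5::real)"
  by (rule real_less_rsqrt) (simp add: power2_eq_square)
lemma s5hi: "sqrt 5 < (9/4::real)"
  by (rule real_less_lsqrt) (auto simp: power2_eq_square)

lemma phi_sq: "phi^2 = phi + 1"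
  unfolding phi_def by (simp add: power2_eq_square field_simps)
lemma phi3: "phi^3 = 2 + sqrt 5"
  unfolding phi_def by (simp add: power3_eq_cube field_simps)
lemma phi4: "phi^4 = (7 + 3 * sqrt 5)/2"
proof -
  have "phi^4 = phi^3 * phi" by (simp add: power_Suc2 numeral_eq_Suc del: power_Suc)
  thus ?thesis unfolding phi3 unfolding phi_def by (simp add: field_simps)
qed

lemma key_a: assumes "a \<ge> 0" "phi*a \<le> b" shows "a \<le> (sqrt 5 - 1)/2 * b"
proof -
  have "(sqrt 5 - 1)/2 * (phi * a) \<le> (sqrt 5 - 1)/2 * b"
    using assms s5lo by (intro mult_left_mono) auto
  moreover have "(sqrt 5 - 1)/2 * (phi * a) = a" unfolding phi_def by (simp add: field_simps)
  ultimately show ?thesis by linarith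
qed

lemma stepA_inv: assumes "a \<ge> 0" "phi*a \<le> b" shows "phi*(a+b) \<le> a + 2*b"
proof -
  have "a \<le> (sqrt 5 - 1)/2 * b" using key_a assms by blast
  hence "(sqrt 5 - 1) * a \<le> (sqrt 5 - 1) * ((sqrt 5 - 1)/2 * b)"
    using s5lo by (intro mult_left_mono) auto
  moreover have "(sqrt 5 - 1) * ((sqrt 5 - 1)/2 * b) = (3 - sqrt 5) * b"
    by (simp add: field_simps)
  ultimately show ?thesis unfolding phi_def by (simp add: field_simps)
qed

lemma stepC_inv: assumes "a \<ge> 0" "b \<ge> 0" shows "phi*(a+b) \<le> 2*a + 3*b"
proof -
  have "phi \<le> 2" unfolding phi_def using s5hi by simp
  hence "phi*a \<le> 2*a" "phi*b \<le> 3*b" using mult_right_mono[of phi 2 a] mult_right_mono[of phi 3 b] assms by auto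
  thus ?thesis by (simp add: distrib_left)
qed

lemma PhiA: "(a+b) + phi*(a+2*b) = phi^2 * (a + phi * b)"
  unfolding phi_def by (simp add: power2_eq_square field_simps)

lemma PhiC: assumes "a \<ge> 0" "phi*a \<le> b"
  shows "(a+b) + phi*(2*a+3*b) \<le> phi^3 * cc * (a + phi*b)"
proof -
  have k: "a \<le> (sqrt 5 - 1)/2 * b" using key_a assms by blast
  have "phi^3 * cc * (a + phi*b) - ((a+b) + phi*(2*a+3*b)) = ((sqrt 5 - 1)/2 * b - a) / sqrt 5"
    unfolding phi3 unfolding cc_def phi_def by (simp add: field_simps)
  moreover have "((sqrt 5 - 1)/2 * b - a) / sqrt 5 \<ge> 0" using k by simp
  ultimately show ?thesis by linarith
qed

lemma inv1: "x \<in> B \<Longrightarrow> phi * real (fst (vec x)) \<le> real (snd (vec x)) \<and> real (snd (vec x)) \<le> 3 * real (fst (vec x))"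
proof (induction rule: B.induct)
  case blk10
  have "phi \<le> 2" unfolding phi_def using s5hi by simp
  then show ?case by (simp add: vec_def)
next
  case blk100
  have "phi \<le> 2" unfolding phi_def using s5hi by simp
  then show ?case by (simp add: vec_def)
next
  case (app10 x)
  obtain a b where v: "vec x = (a,b)" by (cases "vec x")
  have "phi * (real a + real b) \<le> real a + 2 * real b"
    using stepA_inv[of "real a" "real b"] app10.IH v by simp
  then show ?case using vec_A[OF v] app10.IH v by simp
next
  case (app100 x)
  obtain a b where v: "vec x = (a,b)" by (cases "vec x")
  have "phi * (real a + real b) \<le> 2 * real a + 3 * real b"
    using stepC_inv[of "real a" "real b"] by simp
  then show ?case using vec_C[OF v] app100.IH v by simp
qed

lemma take_app: "x \<in> B \<Longrightarrow> (take 3 (x @ True # y) = [True,False,False]) = (take 3 x = [True,False,False])"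
  by (drule B_shape) auto

lemma cc_pos: "cc > 0" unfolding cc_def by simp
lemma cc_le1: "cc \<le> 1" unfolding cc_def using s5lo by simp
lemma phi_pos: "phi > 0" unfolding phi_def by (simp add: add_pos_nonneg)

lemma main_bound: "x \<in> B \<Longrightarrow> Phi (vec x) \<le> (if take 3 x = [True,False,False] then KC else phi) * phi ^ length x * cc ^ nat (delta x)"
proof (induction rule: B.induct)
  case blk10
  have "phi^3 = 1 + 2*phi" unfolding phi3 unfolding phi_def by simp
  then show ?case by (simp add: vec_def Phi_def delta_def power3_eq_cube power2_eq_square algebra_simps)
next
  case blk100
  have "phi^3 * cc \<noteq> 0" using phi_pos cc_pos by simp
  hence "KC * phi^3 * cc = phi^4 - 1" unfolding KC_def by (simp add: field_simps)
  also have "\<dots> = 1 + 3 * phi" using phi4 unfolding phi_def by (simp add: field_simps)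
  finally have e: "KC * phi^3 * cc = 1 + 3 * phi" .
  have g: "(if take 3 [True,False,False] = [True,False,False] then KC else phi) * phi ^ length [True,False,False] * cc ^ nat (delta [True,False,False]) = KC * phi^3 * cc"
    by (simp add: delta_def power3_eq_cube)
  have p: "Phi (vec [True,False,False]) = 1 + 3 * phi" by (simp add: vec_def Phi_def)
  show ?case unfolding g p e by simp
next
  case (app10 x)
  define K where "K = (if take 3 x = [True,False,False] then KC else phi)"
  have K: "(if take 3 (x@[True,False]) = [True,False,False] then KC else phi) = K"
    using take_app[OF app10.hyps, of "[False]"] unfolding K_def by simp
  obtain a b where v: "vec x = (a,b)" by (cases "vec x")
  have "Phi (vec (x@[True,False])) = phi^2 * Phi (vec x)"
    using vec_A[OF v] v PhiA[of "real a" "real b"] by (simp add: Phi_def)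
  also have "\<dots> \<le> phi^2 * (K * phi ^ length x * cc ^ nat (delta x))"
    using app10.IH unfolding K_def by (intro mult_left_mono) auto
  also have "\<dots> = K * phi ^ length (x@[True,False]) * cc ^ nat (delta (x@[True,False]))"
    by (simp add: delta_A power_add power2_eq_square algebra_simps)
  finally show ?case using K by simp
next
  case (app100 x)
  define K where "K = (if take 3 x = [True,False,False] then KC else phi)"
  have K: "(if take 3 (x@[True,False,False]) = [True,False,False] then KC else phi) = K"
    using take_app[OF app100.hyps, of "[False,False]"] unfolding K_def by simp
  obtain a b where v: "vec x = (a,b)" by (cases "vec x")
  have i: "phi * real a \<le> real b" using inv1[OF app100.hyps] v by simp
  have "Phi (vec (x@[True,False,False])) \<le> phi^3 * cc * Phi (vec x)"
    using vec_C[OF v] v PhiC[of "real a" "real b"] i by (simp add: Phi_def)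
  also have "\<dots> \<le> phi^3 * cc * (K * phi ^ length x * cc ^ nat (delta x))"
    using app100.IH phi_pos cc_pos unfolding K_def by (intro mult_left_mono) auto
  also have "\<dots> = K * phi ^ length (x@[True,False,False]) * cc ^ nat (delta (x@[True,False,False]))"
    using delta_nonneg[OF app100.hyps]
    by (simp add: delta_C power_add power3_eq_cube algebra_simps nat_add_distrib)
  finally show ?case using K by simp
qed

fun tens :: "nat \<Rightarrow> bool list" where
  "tens 0 = []"
| "tens (Suc m) = tens m @ [True,False]"

lemma tens_len: "length (tens m) = 2*m"
  by (induction m) auto

lemma Phi_tens: "Phi (vec (u @ tens m)) = phi^(2*m) * Phi (vec u)"
proof (induction m)
  case 0 then show ?case by simp
next
  case (Suc m)
  obtain a b where v: "vec (u @ tens m) = (a,b)" by (cases "vec (u @ tens m)")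
  have "Phi (vec (u @ tens (Suc m))) = phi^2 * Phi (vec (u @ tens m))"
    using vec_A[OF v] v PhiA[of "real a" "real b"] by (simp add: Phi_def)
  then show ?case using Suc by (simp add: power_add power2_eq_square algebra_simps)
qed

lemma tens_B: "tens (Suc m) \<in> B"
  by (induction m) (auto intro: B.intros simp del: tens.simps(2) simp add: tens.simps(2)[of 0], 
      metis B.app10 tens.simps(2))

lemma Ctens_B: "[True,False,False] @ tens m \<in> B"
proof (induction m)
  case 0 then show ?case by (simp add: B.blk100)
next
  case (Suc m) then show ?case using B.app10 by fastforce
qed

lemma snd_lower: "x \<in> B \<Longrightarrow> Phi (vec x) \<le> sqrt 5 * real (snd (vec x))"
proof -
  assume x: "x \<in> B"
  obtain a b where v: "vec x = (a,b)" by (cases "vec x")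
  have "real a \<le> (sqrt 5 - 1)/2 * real b" using key_a[of "real a" "real b"] inv1[OF x] v by simp
  hence "real a + phi * real b \<le> sqrt 5 * real b" unfolding phi_def by (simp add: field_simps)
  thus ?thesis using v by (simp add: Phi_def)
qed

lemma snd_upper: "x \<in> B \<Longrightarrow> length x \<ge> 4 \<Longrightarrow> (phi + 4/11) * real (snd (vec x)) \<le> Phi (vec x)"
proof -
  assume x: "x \<in> B" and l: "length x \<ge> 4"
  have r: "4 * real (snd (vec x)) \<le> 11 * real (fst (vec x))"
    using x l
  proof (cases rule: B.cases)
    case (app10 y)
    obtain a b where v: "vec y = (a,b)" by (cases "vec y")
    show ?thesis using vec_A[OF v] app10 by simp
  next
    case (app100 y)
    obtain a b where v: "vec y = (a,b)" by (cases "vec y")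
    have "real b \<le> 3 * real a" using inv1[OF app100(2)] v by simp
    then show ?thesis using vec_C[OF v] app100 by simp
  qed auto
  thus ?thesis by (simp add: Phi_def algebra_simps)
qed

lemma numC: "KC * cc^5 * sqrt 5 \<le> phi + 4/11"
proof -
  have c2: "cc^2 = 4/5" unfolding cc_def by (simp add: power2_eq_square)
  have "cc^5 = cc^2 * cc^2 * cc" by (simp add: power2_eq_square power_Suc2 numeral_eq_Suc del: power_Suc)
  hence "KC * cc^5 = (phi^4 - 1) * (cc^2 * cc^2) / phi^3"
    unfolding KC_def using cc_pos phi_pos by (simp add: field_simps)
  also have "\<dots> = (phi^4 - 1) * (16/25) / phi^3" unfolding c2 by simp
  also have "phi^4 - 1 = (5 + 3*sqrt 5)/2" using phi4 by simp
  also have "\<dots> * (16/25) / phi^3 = ((5 + 3*sqrt 5)/2) * (16/25) / (2 + sqrt 5)" unfolding phi3 by simp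
  finally have e: "KC * cc^5 * sqrt 5 = ((5 + 3*sqrt 5)/2) * (16/25) / (2 + sqrt 5) * sqrt 5" by simp
  have "((5 + 3*sqrt 5)/2) * (16/25) * sqrt 5 \<le> (phi + 4/11) * (2 + sqrt 5)"
    unfolding phi_def using s5lo s5 by (simp add: field_simps)
  hence "((5 + 3*sqrt 5)/2) * (16/25) / (2 + sqrt 5) * sqrt 5 \<le> phi + 4/11"
    by (simp add: field_simps add_pos_pos)
  thus ?thesis using e by simp
qed

lemma numA: "phi^4 * cc^5 * sqrt 5 \<le> (phi^4 - 1) * (phi + 4/11)"
proof -
  have c2: "cc^2 = 4/5" unfolding cc_def by (simp add: power2_eq_square)
  have "cc^5 * sqrt 5 = cc^2 * cc^2 * (cc * sqrt 5)" by (simp add: power2_eq_square power_Suc2 numeral_eq_Suc del: power_Suc)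
  also have "\<dots> = 32/25" proof -
    have "cc * sqrt 5 = 2" unfolding cc_def by simp
    thus ?thesis unfolding c2 by simp
  qed
  finally have e: "cc^5 * sqrt 5 = 32/25" .
  have "phi^4 * (32/25) \<le> (phi^4 - 1) * (phi + 4/11)"
    unfolding phi4 unfolding phi_def using s5lo s5 by (simp add: field_simps s5')
  moreover have "phi ^ 4 * cc ^ 5 * sqrt 5 = phi^4 * (32/25)" using e by (simp add: mult.assoc)
  ultimately show ?thesis by linarith
qed

lemma KC_nonneg: "KC \<ge> 0"
proof -
  have "phi^4 - 1 \<ge> 0" unfolding phi4 using s5pos by simp
  thus ?thesis unfolding KC_def using phi_pos cc_pos by simp
qed

lemma notR: assumes "bin_val w < bin_val x" "snd (vec x) \<le> snd (vec w)" shows "bin_val x \<notin> R"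
proof
  assume "bin_val x \<in> R"
  hence "s (bin_val w) < s (bin_val x)" using assms(1) unfolding R_def by blast
  thus False using assms(2) by (simp add: s_vec)
qed

theorem mainTheorem14:
  fixes n :: nat and x :: "bool list"
  assumes "n \<ge> 3" and "x \<in> B" and "length x = 2 * n + 9" and "delta x \<ge> 5"
  shows "bin_val x \<notin> R"
proof -
  note xB = assms(2)
  define K where "K = (if take 3 x = [True,False,False] then KC else phi)"
  define b where "b = real (snd (vec x))"
  define L where "L = 2 * n + 9"
  have Kpos: "K \<ge> 0" unfolding K_def using KC_nonneg phi_pos by auto
  have d5: "cc ^ nat (delta x) \<le> cc^5"
    using power_decreasing[of 5 "nat (delta x)" cc] cc_pos cc_le1 assms(4) by auto
  have "(phi + 4/11) * b \<le> Phi (vec x)" unfolding b_def using snd_upper[OF xB] assms(3) by simp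
  also have "\<dots> \<le> K * phi ^ L * cc ^ nat (delta x)" using main_bound[OF xB] assms(3) unfolding K_def L_def by simp
  also have "\<dots> \<le> K * phi ^ L * cc ^ 5" using Kpos phi_pos d5 by (intro mult_left_mono) auto
  finally have up: "(phi + 4/11) * b \<le> K * phi ^ L * cc ^ 5" .
  have pp: "phi + 4/11 > 0" using phi_pos by simp
  have sp: "sqrt 5 > (0::real)" by simp
  show ?thesis
  proof (cases "take 3 x = [True,False,False]")
    case True
    define w where "w = tens (n+4)"
    have wB: "w \<in> B" unfolding w_def using tens_B[of "n+3"] by (simp add: numeral_eq_Suc)
    have "Phi (vec w) = phi^(2*(n+4)) * Phi (vec [])" using Phi_tens[of "[]" "n+4"] unfolding w_def by simp
    also have "\<dots> = phi ^ L"
    proof -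
      have "L = Suc (2*(n+4))" unfolding L_def by simp
      hence "phi ^ L = phi^(2*(n+4)) * phi" by (simp only: power_Suc2)
      thus ?thesis by (simp add: vec_def Phi_def)
    qed
    finally have Pw: "Phi (vec w) = phi ^ L" .
    have lw: "phi ^ L \<le> sqrt 5 * real (snd (vec w))" using snd_lower[OF wB] Pw by simp
    have "(phi + 4/11) * b * sqrt 5 \<le> K * phi ^ L * cc ^ 5 * sqrt 5" using up sp by (intro mult_right_mono) auto
    also have "\<dots> = (KC * cc^5 * sqrt 5) * phi ^ L" unfolding K_def using True by simp
    also have "\<dots> \<le> (phi + 4/11) * phi ^ L" using numC phi_pos by (intro mult_right_mono) auto
    also have "\<dots> \<le> (phi + 4/11) * (sqrt 5 * real (snd (vec w)))" using lw pp by (intro mult_left_mono) auto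
    finally have "((phi + 4/11) * sqrt 5) * b \<le> ((phi + 4/11) * sqrt 5) * real (snd (vec w))"
      by (simp add: algebra_simps)
    hence "b \<le> real (snd (vec w))" using pp sp by (simp add: mult_le_cancel_left_pos)
    hence le: "snd (vec x) \<le> snd (vec w)" unfolding b_def by simp
    obtain v where xv: "x = True # v" using B_shape[OF xB] by auto
    have lv: "length v = 2*n+8" using xv assms(3) by simp
    have "bin_val w < 2 ^ (2*n+8)" using bin_val_less[of w] unfolding w_def by (simp add: tens_len)
    also have "\<dots> \<le> bin_val x" using bin_val_append[of "[True]" v] xv lv by (simp add: bin_val_def)
    finally show ?thesis using notR le by blast
  next
    case False
    obtain v where xv: "x = True # False # True # v"
      using B_shape[OF xB] False assms(3) by auto
    have lv: "length v = 2*n+6" using xv assms(3) by simp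
    define w where "w = [True,False,False] @ tens (n+3)"
    have wB: "w \<in> B" unfolding w_def by (rule Ctens_B)
    have "Phi (vec w) = phi^(2*(n+3)) * Phi (vec [True,False,False])" unfolding w_def by (rule Phi_tens)
    also have "Phi (vec [True,False,False]) = phi^4 - 1"
    proof -
      have "phi^4 - 1 = 1 + 3 * phi" using phi4 unfolding phi_def by (simp add: field_simps)
      thus ?thesis by (simp add: vec_def Phi_def)
    qed
    finally have Pw: "Phi (vec w) = phi^(2*(n+3)) * (phi^4 - 1)" .
    have lw: "phi^(2*(n+3)) * (phi^4 - 1) \<le> sqrt 5 * real (snd (vec w))" using snd_lower[OF wB] Pw by simp
    have PL: "phi * phi ^ L = phi^(2*(n+3)) * phi^4"
    proof -
      have "Suc L = 2*(n+3) + 4" unfolding L_def by simp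
      hence "phi ^ Suc L = phi^(2*(n+3)) * phi^4" by (simp only: power_add)
      thus ?thesis by simp
    qed
    have q: "phi^(2*(n+3)) > 0" using phi_pos by simp
    have "(phi + 4/11) * b * sqrt 5 \<le> K * phi ^ L * cc ^ 5 * sqrt 5" using up sp by (intro mult_right_mono) auto
    also have "\<dots> = phi^(2*(n+3)) * (phi^4 * cc^5 * sqrt 5)" unfolding K_def using False PL
      by (simp add: algebra_simps)
    also have "\<dots> \<le> phi^(2*(n+3)) * ((phi^4 - 1) * (phi + 4/11))" using numA q by (intro mult_left_mono) auto
    also have "\<dots> = (phi + 4/11) * (phi^(2*(n+3)) * (phi^4 - 1))" by (simp only: ac_simps)
    also have "\<dots> \<le> (phi + 4/11) * (sqrt 5 * real (snd (vec w)))" using lw pp by (intro mult_left_mono) auto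
    finally have "((phi + 4/11) * sqrt 5) * b \<le> ((phi + 4/11) * sqrt 5) * real (snd (vec w))"
      by (simp add: algebra_simps)
    hence "b \<le> real (snd (vec w))" using pp sp by (simp add: mult_le_cancel_left_pos)
    hence le: "snd (vec x) \<le> snd (vec w)" unfolding b_def by simp
    have bw: "bin_val w = 4 * 2^(2*n+6) + bin_val (tens (n+3))"
      using bin_val_append[of "[True,False,False]" "tens (n+3)"] unfolding w_def by (simp add: tens_len bin_val_def)
    have "bin_val (tens (n+3)) < 2^(2*n+6)" using bin_val_less[of "tens (n+3)"] by (simp add: tens_len)
    hence "bin_val w < 5 * 2^(2*n+6)" using bw by simp
    also have "\<dots> \<le> bin_val x" using bin_val_append[of "[True,False,True]" v] xv lv by (simp add: bin_val_def)
    finally show ?thesis using notR le by blast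
  qed
qed
end
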